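(* Let $X\subset\mathbb{R}^{n_x}$, $Y\subset\mathbb{R}^{n_y}$ with $Y$ compact, and let $f:X\times Y\to\mathbb{R}^{n_x}$, $g:X\times Y\to\mathbb{R}^{n_y}$ be continuously differentiable. Suppose $y^*$ is a globally asymptotically stable equilibrium of $\dot y(t)=g(x^*,y(t))$, and that $f$ satisfies: there exist a candidate Lyapunov function $U$ for $x^*$ and a positive definite function $\sigma$ with $\sigma(|x-x^*|)\le\inf_{y\in Y}-\langle\nabla U(x),f(x,y)\rangle$ for all $x\in X$. Then $(x^*,y^* )$ is a globally asymptotically stable equilibrium of the system $\dot x=f(x,y)$, $\dot y=g(x,y)$ (with the norm $|z|=|x|+|y|$ for $z=(x,y)$).
   Context: A function $\alpha:\mathbb{R}_{\ge0}\to\mathbb{R}_{\ge0}$ is of class $\mathcal K_\infty$ if it is continuous, zero at zero, strictly increasing and unbounded; $W:\mathbb{R}_{\ge0}\to\mathbb{R}_{\ge0}$ is positive definite if continuous, $W(0)=0$ and $W(c)>0$ for $c>0$. A candidate Lyapunov function for $x^*$ is a continuously differentiable $U:X\to[0,\infty)$ with $\alpha_1(|x-x^*|)\le U(x)\le\alpha_2(|x-x^*|)$ for some $\alpha_1,\alpha_2\in\mathcal K_\infty$ and $U(x)\ge W(|x-x^*|)$ for some positive definite $W$. For $\dot z=h(z,t)$ with solutions $z(t;z_0,t_0)$, an equilibrium $z^*$ is globally asymptotically stable if (1) for each $\eta>0$ there is $\delta>0$ independent of $t_0$ with $|z_0-z^*|<\delta\Rightarrow|z(t;z_0,t_0)-z^*|<\eta$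 for all $t\ge t_0\ge0$, and (2) for all $\eta,\rho>0$ there is $T(\rho,\eta)<\infty$ independent of $t_0$ with $|z(t;z_0,t_0)-z^*|<\eta$ for $t\ge t_0+T$ whenever $|z_0-z^*|<\rho$. *)

theory Defs
  imports "HOL-Analysis.Analysis"
begin

definition class_K_inf :: "(real \<Rightarrow> real) \<Rightarrow> bool" where
  "class_K_inf \<alpha> \<longleftrightarrow>
     continuous_on {0..} \<alpha> \<and> \<alpha> 0 = 0 \<and> (\<forall>c\<ge>0. \<alpha> c \<ge> 0) \<and>
     strict_mono_on {0..} \<alpha> \<and> (\<forall>M. \<exists>c\<ge>0. \<alpha> c > M)"

definition pos_def_fun :: "(real \<Rightarrow> real) \<Rightarrow> bool" where
  "pos_def_fun W \<longleftrightarrow>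
     continuous_on {0..} W \<and> W 0 = 0 \<and> (\<forall>c\<ge>0. W c \<ge> 0) \<and> (\<forall>c>0. W c > 0)"

definition C1_on :: "'a::real_normed_vector set \<Rightarrow> ('a \<Rightarrow> 'b::real_normed_vector) \<Rightarrow> bool" where
  "C1_on S F \<longleftrightarrow> (\<exists>F'. (\<forall>z\<in>S. (F has_derivative blinfun_apply (F' z)) (at z within S))
                        \<and> continuous_on S F')"

definition candidate_lyapunov ::
  "'a::euclidean_space set \<Rightarrow> 'a \<Rightarrow> ('a \<Rightarrow> real) \<Rightarrow> ('a \<Rightarrow> 'a) \<Rightarrow> bool" where
  "candidate_lyapunov X xstar U DU \<longleftrightarrow>
     (\<forall>x\<in>X. (U has_derivative (\<lambda>h. DU x \<bullet> h)) (at x within X)) \<and>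
     continuous_on X DU \<and>
     (\<forall>x\<in>X. U x \<ge> 0) \<and>
     (\<exists>\<alpha>1 \<alpha>2. class_K_inf \<alpha>1 \<and> class_K_inf \<alpha>2 \<and>
        (\<forall>x\<in>X. \<alpha>1 (norm (x - xstar)) \<le> U x \<and> U x \<le> \<alpha>2 (norm (x - xstar)))) \<and>
     (\<exists>W. pos_def_fun W \<and> (\<forall>x\<in>X. U x \<ge> W (norm (x - xstar))))"

definition is_solution ::
  "('z::real_normed_vector \<Rightarrow> real \<Rightarrow> 'z) \<Rightarrow> 'z set \<Rightarrow> (real \<Rightarrow> 'z) \<Rightarrow> 'z \<Rightarrow> real \<Rightarrow> bool" where
  "is_solution h D z z0 t0 \<longleftrightarrow>
     z t0 = z0 \<and>
     (\<forall>t\<ge>t0. z t \<in> D \<and> (z has_vector_derivative h (z t) t) (at t within {t0..}))"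

definition gas ::
  "('z::real_normed_vector \<Rightarrow> real \<Rightarrow> 'z) \<Rightarrow> 'z set \<Rightarrow> ('z \<Rightarrow> real) \<Rightarrow> 'z \<Rightarrow> bool" where
  "gas h D d zstar \<longleftrightarrow>
     zstar \<in> D \<and>
     (\<forall>\<eta>>0. \<exists>\<delta>>0. \<forall>z z0 t0. t0 \<ge> 0 \<longrightarrow> is_solution h D z z0 t0 \<longrightarrow> d z0 < \<delta> \<longrightarrow>
         (\<forall>t\<ge>t0. d (z t) < \<eta>)) \<and>
     (\<forall>\<eta>>0. \<forall>\<rho>>0. \<exists>T. \<forall>z z0 t0. t0 \<ge> 0 \<longrightarrow> is_solution h D z z0 t0 \<longrightarrow> d z0 < \<rho> \<longrightarrow>
         (\<forall>t\<ge>t0 + T. d (z t) < \<eta>))"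

end

theory Submission
  imports Defs "HOL-Library.Diagonal_Subsequence" "HOL-Complex_Analysis.Great_Picard"
begin


lemma hvd_fst:
  assumes "(z has_vector_derivative v) F"
  shows "((\<lambda>t. fst (z t)) has_vector_derivative fst v) F"
  using has_derivative_fst[OF assms[unfolded has_vector_derivative_def]]
  by (simp add: has_vector_derivative_def)

lemma hvd_snd:
  assumes "(z has_vector_derivative v) F"
  shows "((\<lambda>t. snd (z t)) has_vector_derivative snd v) F"
  using has_derivative_snd[OF assms[unfolded has_vector_derivative_def]]
  by (simp add: has_vector_derivative_def)

lemma mvt_vec:
  fixes y :: "real \<Rightarrow> 'b::real_normed_vector"
  assumes der: "\<And>s. s \<in> S \<Longrightarrow> (y has_vector_derivative D s) (at s within S)"
    and "convex S" and B: "\<And>s. s \<in> S \<Longrightarrow> norm (D s - c) \<le> B"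
    and "a \<in> S" "b \<in> S"
  shows "norm (y b - y a - (b - a) *\<^sub>R c) \<le> B * \<bar>b - a\<bar>"
proof -
  have d: "((\<lambda>s. y s - s *\<^sub>R c) has_derivative (\<lambda>h. h *\<^sub>R (D s - c))) (at s within S)"
    if "s \<in> S" for s
  proof -
    have "((\<lambda>s. y s - s *\<^sub>R c) has_vector_derivative (D s - 1 *\<^sub>R c)) (at s within S)"
    proof (rule has_vector_derivative_diff[OF der[OF that]])
      show "((\<lambda>x. x *\<^sub>R c) has_vector_derivative 1 *\<^sub>R c) (at s within S)"
        by (auto simp: has_vector_derivative_def intro!: derivative_eq_intros)
    qed
    then show ?thesis by (simp add: has_vector_derivative_def)
  qed
  have o: "onorm (\<lambda>h::real. h *\<^sub>R (D s - c)) \<le> B" if "s \<in> S" for s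
    using onorm_scaleR_left[of "\<lambda>h::real. h" "D s - c"] onorm_id[where 'a=real] B[OF that]
    by (simp add: bounded_linear_ident)
  have "norm ((y b - b *\<^sub>R c) - (y a - a *\<^sub>R c)) \<le> B * norm (b - a)"
    by (rule differentiable_bound[OF \<open>convex S\<close> d o \<open>b \<in> S\<close> \<open>a \<in> S\<close>]) auto
  then show ?thesis by (simp add: algebra_simps)
qed

lemma lip_vec:
  fixes y :: "real \<Rightarrow> 'b::real_normed_vector"
  assumes der: "\<And>s. s \<ge> 0 \<Longrightarrow> (y has_vector_derivative D s) (at s within {0..})"
    and B: "\<And>s. s \<ge> 0 \<Longrightarrow> norm (D s) \<le> B"
    and "a \<ge> 0" "b \<ge> 0"
  shows "norm (y b - y a) \<le> B * \<bar>b - a\<bar>"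
  using mvt_vec[of "{0..}" y D 0 B a b] assms by auto

lemma limit_solution:
  fixes Ys D :: "nat \<Rightarrow> real \<Rightarrow> 'b::euclidean_space" and G0 :: "'b \<Rightarrow> 'b"
  assumes cY: "compact Y" and cG: "continuous_on Y G0"
    and inY: "\<And>n t. t \<ge> 0 \<Longrightarrow> Ys n t \<in> Y"
    and der: "\<And>n t. t \<ge> 0 \<Longrightarrow> (Ys n has_vector_derivative D n t) (at t within {0..})"
    and conv: "\<And>e. e > 0 \<Longrightarrow> \<exists>N. \<forall>n\<ge>N. \<forall>t\<ge>0. norm (D n t - G0 (Ys n t)) < e"
  shows "\<exists>(r::nat\<Rightarrow>nat) w. strict_mono r \<and> (\<forall>t\<ge>0. w t \<in> Y) \<and>
    (\<forall>t\<ge>0. (w has_vector_derivative G0 (w t)) (at t within {0..})) \<and>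
    (\<forall>K e. e > 0 \<longrightarrow> (\<exists>N. \<forall>n\<ge>N. \<forall>t\<in>{0..K}. norm (Ys (r n) t - w t) < e))"
proof -
  obtain B0 where B0: "\<forall>y\<in>Y. norm (G0 y) \<le> B0"
    using compact_imp_bounded[OF compact_continuous_image[OF cG cY]] unfolding bounded_iff by auto
  obtain BY where BY: "\<forall>y\<in>Y. norm y \<le> BY"
    using compact_imp_bounded[OF cY] unfolding bounded_iff by auto
  obtain N1 where N1: "\<forall>n\<ge>N1. \<forall>t\<ge>0. norm (D n t - G0 (Ys n t)) < 1"
    using conv[of 1] by auto
  define B where "B = \<bar>B0\<bar> + 1"
  have Bpos: "B > 0" unfolding B_def by simp
  have Dn: "norm (D n t) \<le> B" if "n \<ge> N1" "t \<ge> 0" for n t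
  proof -
    have "norm (D n t) \<le> norm (G0 (Ys n t)) + norm (D n t - G0 (Ys n t))"
      by (rule norm_triangle_sub)
    moreover have "norm (D n t - G0 (Ys n t)) < 1" using N1 that by auto
    moreover have "norm (G0 (Ys n t)) \<le> B0" using B0 inY[OF that(2)] by auto
    ultimately show ?thesis unfolding B_def by linarith
  qed
  have lip: "norm (Ys n b - Ys n a) \<le> B * \<bar>b - a\<bar>" if "n \<ge> N1" "a \<ge> 0" "b \<ge> 0" for n a b
    using lip_vec[of "Ys n" "D n" B a b] der Dn that by auto
  define F where "F n = Ys (n + N1)" for n
  define P where "P K r \<longleftrightarrow> (\<exists>w. \<forall>e>0. \<exists>N. \<forall>n\<ge>N. \<forall>t\<in>{0..real K}. norm (F (r n) t - w t) < e)"
    for K :: nat and r :: "nat \<Rightarrow> nat"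
  have ex: "\<exists>r'. strict_mono r' \<and> P K (s \<circ> r')" if "strict_mono s" for K and s :: "nat \<Rightarrow> nat"
  proof -
    obtain g k where g: "continuous_on {0..real K} g" "strict_mono (k :: nat \<Rightarrow> nat)"
      "\<And>e. 0 < e \<Longrightarrow> \<exists>N. \<forall>n x. n \<ge> N \<and> x \<in> {0..real K} \<longrightarrow> norm (F (s (k n)) x - g x) < e"
    proof (rule Arzela_Ascoli[of "{0..real K}" "\<lambda>n. F (s n)" BY])
      show "compact {0..real K}" by simp
      show "norm (F (s n) x) \<le> BY" if "x \<in> {0..real K}" for n x
        using BY inY that unfolding F_def by auto
      show "\<exists>d. 0 < d \<and> (\<forall>n y. y \<in> {0..real K} \<and> norm (x - y) < d \<longrightarrow> norm (F (s n) x - F (s n) y) < e)"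
        if "x \<in> {0..real K}" "0 < e" for x e
      proof (intro exI conjI allI impI)
        show "0 < e / B" using that Bpos by simp
        fix n y assume y: "y \<in> {0..real K} \<and> norm (x - y) < e / B"
        have "norm (F (s n) x - F (s n) y) \<le> B * \<bar>x - y\<bar>"
          unfolding F_def using lip[of "s n + N1" y x] that y by auto
        also have "\<dots> < B * (e / B)" using y Bpos by (intro mult_strict_left_mono) auto
        finally show "norm (F (s n) x - F (s n) y) < e" using Bpos by simp
      qed
    qed (blast intro: that)
    have "P K (s \<circ> k)" unfolding P_def
    proof (intro exI[of _ g] allI impI)
      fix e :: real assume "e > 0"
      then obtain N where "\<forall>n x. N \<le> n \<and> x \<in> {0..real K} \<longrightarrow> norm (F (s (k n)) x - g x) < e"
        using g(3) by blast
      then show "\<exists>N. \<forall>n\<ge>N. \<forall>t\<in>{0..real K}. norm (F ((s \<circ> k) n) t - g t) < e"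
        by (intro exI[of _ N]) auto
    qed
    then show ?thesis using g(2) by blast
  qed
  interpret subseqs P by unfold_locales (rule ex)
  have stable: "P n (s \<circ> r)" if "strict_mono r" "P n s" for r s n
  proof -
    from that(2) obtain w where w: "\<forall>e>0. \<exists>N. \<forall>n'\<ge>N. \<forall>t\<in>{0..real n}. norm (F (s n') t - w t) < e"
      unfolding P_def by blast
    have "\<exists>N. \<forall>n'\<ge>N. \<forall>t\<in>{0..real n}. norm (F ((s \<circ> r) n') t - w t) < e" if "e > 0" for e
    proof -
      obtain N where "\<forall>n'\<ge>N. \<forall>t\<in>{0..real n}. norm (F (s n') t - w t) < e" using w \<open>e > 0\<close> by blast
      moreover have "r n' \<ge> n'" for n' using seq_suble[OF \<open>strict_mono r\<close>] by blast
      ultimately have "\<forall>n'\<ge>N. \<forall>t\<in>{0..real n}. norm (F (s (r n')) t - w t) < e"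
        using le_trans by blast
      then show ?thesis by auto
    qed
    then show ?thesis unfolding P_def by blast
  qed
  have PK: "P K (diagseq \<circ> (+) (Suc K))" for K by (rule diagseq_holds[OF stable])
  define w where "w t = lim (\<lambda>n. F (diagseq n) t)" for t
  have uni: "\<exists>N. \<forall>n\<ge>N. \<forall>t\<in>{0..real K}. norm (F (diagseq n) t - w t) < e" if "e > 0" for K e
  proof -
    from PK[of K] obtain wK where wK: "\<forall>e>0. \<exists>N. \<forall>n\<ge>N. \<forall>t\<in>{0..real K}. norm (F (diagseq (Suc K + n)) t - wK t) < e"
      unfolding P_def by auto
    have wt: "w t = wK t" if "t \<in> {0..real K}" for t
    proof -
      have "(\<lambda>n. F (diagseq (n + Suc K)) t) \<longlonglongrightarrow> wK t"
        unfolding LIMSEQ_iff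
      proof (intro allI impI)
        fix r :: real assume "r > 0"
        then obtain N where "\<forall>n\<ge>N. \<forall>t\<in>{0..real K}. norm (F (diagseq (Suc K + n)) t - wK t) < r"
          using wK by blast
        then show "\<exists>no. \<forall>n\<ge>no. norm (F (diagseq (n + Suc K)) t - wK t) < r"
          using that by (intro exI[of _ N]) (simp add: add.commute)
      qed
      then have "(\<lambda>n. F (diagseq n) t) \<longlonglongrightarrow> wK t" by (rule LIMSEQ_offset)
      then show ?thesis unfolding w_def by (rule limI)
    qed
    obtain N where N: "\<forall>n\<ge>N. \<forall>t\<in>{0..real K}. norm (F (diagseq (Suc K + n)) t - wK t) < e"
      using wK \<open>e > 0\<close> by blast
    show ?thesis
    proof (intro exI[of _ "N + Suc K"] allI impI ballI)
      fix n t assume "n \<ge> N + Suc K" "t \<in> {0..real K}"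
      then show "norm (F (diagseq n) t - w t) < e"
        using N[rule_format, of "n - Suc K" t] wt by auto
    qed
  qed
  have pt: "(\<lambda>n. F (diagseq n) t) \<longlonglongrightarrow> w t" if "t \<ge> 0" for t
  proof -
    have "t \<in> {0..real (nat \<lceil>t\<rceil>)}" using that by (simp add: real_nat_ceiling_ge)
    then show ?thesis unfolding LIMSEQ_iff using uni[of _ "nat \<lceil>t\<rceil>"] by blast
  qed
  define r where "r n = diagseq n + N1" for n
  have smr: "strict_mono r" unfolding r_def using subseq_diagseq by (simp add: strict_mono_def)
  have Fr: "F (diagseq n) = Ys (r n)" for n unfolding F_def r_def by simp
  have rge: "r n \<ge> n" "r n \<ge> N1" for n
    unfolding r_def using seq_suble[OF subseq_diagseq, of n] by auto
  have wY: "w t \<in> Y" if "t \<ge> 0" for t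
  proof (rule Lim_in_closed_set[OF compact_imp_closed[OF cY] _ _ pt[OF that]])
    show "\<forall>\<^sub>F n in sequentially. F (diagseq n) t \<in> Y" using inY that Fr by simp
  qed simp
  have wder: "(w has_vector_derivative G0 (w t)) (at t within {0..})" if t0: "t \<ge> 0" for t
  proof -
    define c where "c = G0 (w t)"
    have "\<exists>d>0. \<forall>s\<in>{0..}. norm (s - t) < d \<longrightarrow> norm (w s - w t - (s - t) *\<^sub>R c) \<le> e * norm (s - t)"
      if e: "e > 0" for e
    proof -
      obtain d1 where d1: "d1 > 0" "\<forall>x\<in>Y. \<forall>x'\<in>Y. dist x' x < d1 \<longrightarrow> dist (G0 x') (G0 x) < e / 2"
        using compact_uniformly_continuous[OF cG cY] e unfolding uniformly_continuous_on_def
        by (meson half_gt_zero)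
      obtain N2 where N2: "\<forall>n\<ge>N2. \<forall>t\<ge>0. norm (D n t - G0 (Ys n t)) < e / 2"
        using conv[of "e/2"] e by auto
      obtain N3 where N3: "\<forall>n\<ge>N3. norm (F (diagseq n) t - w t) < d1 / 2"
        using pt[OF t0] d1(1) unfolding LIMSEQ_iff by (meson half_gt_zero)
      show ?thesis
      proof (intro exI[of _ "d1 / (2 * B)"] conjI ballI impI)
        show "d1 / (2 * B) > 0" using d1 Bpos by simp
        fix s :: real assume s: "s \<in> {0..}" "norm (s - t) < d1 / (2 * B)"
        have ev: "norm (F (diagseq n) s - F (diagseq n) t - (s - t) *\<^sub>R c) \<le> e * \<bar>s - t\<bar>"
          if n: "n \<ge> max N2 N3" for n
        proof -
          let ?m = "r n"
          have segsub: "closed_segment t s \<subseteq> {0..}"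
            using s t0 by (auto simp: closed_segment_eq_real_ivl split: if_splits)
          have useg: "\<bar>u - t\<bar> \<le> \<bar>s - t\<bar>" if "u \<in> closed_segment t s" for u
            using that by (auto simp: closed_segment_eq_real_ivl split: if_splits)
          have "norm (Ys ?m s - Ys ?m t - (s - t) *\<^sub>R c) \<le> e * \<bar>s - t\<bar>"
          proof (rule mvt_vec[of "closed_segment t s" "Ys ?m" "D ?m" c e t s])
            fix u assume u: "u \<in> closed_segment t s"
            then have u0: "u \<ge> 0" using segsub by auto
            show "(Ys ?m has_vector_derivative D ?m u) (at u within closed_segment t s)"
              using der[OF u0] segsub by (rule has_vector_derivative_within_subset)
            have "norm (Ys ?m u - Ys ?m t) \<le> B * \<bar>u - t\<bar>" using lip[of ?m t u] rge u0 t0 by auto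
            also have "\<dots> \<le> B * \<bar>s - t\<bar>" using useg[OF u] Bpos by simp
            also have "\<dots> < B * (d1 / (2 * B))" using s Bpos by (intro mult_strict_left_mono) auto
            also have "\<dots> = d1 / 2" using Bpos by simp
            finally have a1: "norm (Ys ?m u - Ys ?m t) < d1 / 2" .
            have a2: "norm (Ys ?m t - w t) < d1 / 2" using N3 n Fr by auto
            have "dist (Ys ?m u) (w t) < d1" unfolding dist_norm
              using norm_triangle_lt[of "Ys ?m u - Ys ?m t" "Ys ?m t - w t" d1] a1 a2 by simp
            then have "dist (G0 (Ys ?m u)) c < e / 2"
              unfolding c_def using d1(2) inY[OF u0] wY[OF t0] by blast
            moreover have "norm (D ?m u - G0 (Ys ?m u)) < e / 2"
              using N2 n rge(1)[of n] u0 by auto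
            ultimately show "norm (D ?m u - c) \<le> e"
              unfolding dist_norm using norm_triangle_lt[of "D ?m u - G0 (Ys ?m u)" "G0 (Ys ?m u) - c" e]
              by simp
          qed auto
          then show ?thesis using Fr by simp
        qed
        have lim: "(\<lambda>n. norm (F (diagseq n) s - F (diagseq n) t - (s - t) *\<^sub>R c))
            \<longlonglongrightarrow> norm (w s - w t - (s - t) *\<^sub>R c)"
          using s t0 by (intro tendsto_intros pt) auto
        have "norm (w s - w t - (s - t) *\<^sub>R c) \<le> e * \<bar>s - t\<bar>"
          by (rule LIMSEQ_le_const2[OF lim]) (use ev in blast)
        then show "norm (w s - w t - (s - t) *\<^sub>R c) \<le> e * norm (s - t)" by simp
      qed
    qed
    then show ?thesis
      unfolding has_vector_derivative_def has_derivative_within_alt c_def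
      by (simp add: bounded_linear_scaleR_left)
  qed
  show ?thesis
  proof (intro exI[of _ r] exI[of _ w] conjI allI impI)
    show "strict_mono r" by (rule smr)
    show "\<And>t. 0 \<le> t \<Longrightarrow> w t \<in> Y" by (rule wY)
    show "\<And>t. 0 \<le> t \<Longrightarrow> (w has_vector_derivative G0 (w t)) (at t within {0..})" by (rule wder)
  next
    fix K :: real and e :: real assume "e > 0"
    then obtain N where N: "\<forall>n\<ge>N. \<forall>t\<in>{0..real (nat \<lceil>K\<rceil>)}. norm (F (diagseq n) t - w t) < e"
      using uni by blast
    have "{0..K} \<subseteq> {0..real (nat \<lceil>K\<rceil>)}"
      by (auto intro: order_trans[OF _ real_nat_ceiling_ge])
    show "\<exists>N. \<forall>n\<ge>N. \<forall>t\<in>{0..K}. norm (Ys (r n) t - w t) < e"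
    proof (intro exI[of _ N] allI impI ballI)
      fix n t assume n: "n \<ge> N" and "t \<in> {0..K}"
      then have "t \<in> {0..real (nat \<lceil>K\<rceil>)}" using \<open>{0..K} \<subseteq> _\<close> by blast
      from N[rule_format, OF n this] show "norm (Ys (r n) t - w t) < e" by (simp only: Fr)
    qed
  qed
qed




lemma tri3: "norm (a - c) \<le> norm (a - b) + norm (b - (c::'a::real_normed_vector))"
  using norm_triangle_ineq[of "a - b" "b - c"] by simp

lemma Ycore:
  fixes Ys D :: "nat \<Rightarrow> real \<Rightarrow> 'b::euclidean_space" and G0 :: "'b \<Rightarrow> 'b"
  assumes cY: "compact Y" and cG: "continuous_on Y G0"
    and inY: "\<And>n t. t \<ge> 0 \<Longrightarrow> Ys n t \<in> Y"
    and der: "\<And>n t. t \<ge> 0 \<Longrightarrow> (Ys n has_vector_derivative D n t) (at t within {0..})"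
    and conv: "\<And>e. e > 0 \<Longrightarrow> \<exists>N. \<forall>n\<ge>N. \<forall>t\<ge>0. norm (D n t - G0 (Ys n t)) < e"
    and gas0: "gas (\<lambda>y t. G0 y) Y (\<lambda>y. norm (y - ystar)) ystar"
    and rhoY: "\<forall>y\<in>Y. norm (y - ystar) < \<rho>Y"
    and eta: "\<eta> > 0"
    and T: "\<And>w. is_solution (\<lambda>y t. G0 y) Y w (w 0) 0 \<Longrightarrow> norm (w 0 - ystar) < \<rho>Y \<Longrightarrow>
              \<forall>t\<ge>T. norm (w t - ystar) < \<eta>/4"
    and tau: "\<And>n. 0 \<le> \<tau> n \<and> \<tau> n \<le> T"
    and tauc: "\<And>n. \<tau> n < T \<Longrightarrow> norm (Ys n 0 - ystar) < 1 / (real n + 1)"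
  shows "\<exists>n. norm (Ys n (\<tau> n) - ystar) < \<eta>/2"
proof -
  obtain r :: "nat \<Rightarrow> nat" and w where
    rw: "strict_mono r \<and> (\<forall>t\<ge>0. w t \<in> Y) \<and> (\<forall>t\<ge>0. (w has_vector_derivative G0 (w t)) (at t within {0..}))
      \<and> (\<forall>K e. e > 0 \<longrightarrow> (\<exists>N. \<forall>n\<ge>N. \<forall>t\<in>{0..K}. norm (Ys (r n) t - w t) < e))"
    using limit_solution[OF cY cG inY der conv] by blast
  have r: "strict_mono r" and wY: "\<And>t. t \<ge> 0 \<Longrightarrow> w t \<in> Y"
    and wd: "\<And>t. t \<ge> 0 \<Longrightarrow> (w has_vector_derivative G0 (w t)) (at t within {0..})"
    and wu: "\<And>K e. e > 0 \<Longrightarrow> \<exists>N. \<forall>n\<ge>N. \<forall>t\<in>{0..K}. norm (Ys (r n) t - w t) < e"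
    using rw by auto
  have sol: "is_solution (\<lambda>y t. G0 y) Y w (w 0) 0"
    unfolding is_solution_def using wY wd by auto
  have e4: "\<eta>/4 > 0" using eta by simp
  have gs: "\<forall>\<eta>>0. \<exists>\<delta>>0. \<forall>z z0 t0. t0 \<ge> 0 \<longrightarrow> is_solution (\<lambda>y t. G0 y) Y z z0 t0 \<longrightarrow> norm (z0 - ystar) < \<delta> \<longrightarrow>
         (\<forall>t\<ge>t0. norm (z t - ystar) < \<eta>)"
    using gas0 unfolding gas_def by (rule conjunct1[OF conjunct2])
  from gs[rule_format, OF e4] obtain \<delta>s where \<delta>s: "\<delta>s > 0" and
    st0: "\<forall>z z0 t0. t0 \<ge> 0 \<longrightarrow> is_solution (\<lambda>y t. G0 y) Y z z0 t0 \<longrightarrow>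
      norm (z0 - ystar) < \<delta>s \<longrightarrow> (\<forall>t\<ge>t0. norm (z t - ystar) < \<eta>/4)"
    by blast
  have st: "\<And>z z0 t0. t0 \<ge> 0 \<Longrightarrow> is_solution (\<lambda>y t. G0 y) Y z z0 t0 \<Longrightarrow>
      norm (z0 - ystar) < \<delta>s \<Longrightarrow> \<forall>t\<ge>t0. norm (z t - ystar) < \<eta>/4"
    using st0 by blast
  have wT: "norm (w t - ystar) < \<eta>/4" if "t \<ge> T" for t
    using T[OF sol] rhoY wY[of 0] that by simp
  have rge: "r n \<ge> n" for n using seq_suble[OF r] by blast
  show ?thesis
  proof (cases "norm (w 0 - ystar) < \<delta>s")
    case True
    have wall: "norm (w t - ystar) < \<eta>/4" if "t \<ge> 0" for t
      using st[OF _ sol True] that by simp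
    obtain N where N: "\<forall>n\<ge>N. \<forall>t\<in>{0..T}. norm (Ys (r n) t - w t) < \<eta>/4"
      using wu[of "\<eta>/4" T] eta by auto
    have a: "norm (Ys (r N) (\<tau> (r N)) - w (\<tau> (r N))) < \<eta>/4"
      using N[rule_format, of N "\<tau> (r N)"] tau[of "r N"] by auto
    have b: "norm (w (\<tau> (r N)) - ystar) < \<eta>/4" using wall tau by auto
    have "norm (Ys (r N) (\<tau> (r N)) - ystar) < \<eta>/4 + \<eta>/4"
      using tri3[of "Ys (r N) (\<tau> (r N))" ystar "w (\<tau> (r N))"] a b by linarith
    then show ?thesis by auto
  next
    case False
    define e where "e = min (\<eta>/4) (\<delta>s/2)"
    have e: "e > 0" unfolding e_def using eta \<delta>s by auto
    obtain N1 where N1: "\<forall>n\<ge>N1. \<forall>t\<in>{0..T}. norm (Ys (r n) t - w t) < e"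
      using wu[OF e] by blast
    obtain N2 :: nat where N2: "1 / (real N2 + 1) < \<delta>s/2"
    proof -
      have "\<delta>s/2 > 0" using \<delta>s by simp
      then obtain k :: nat where "inverse (real (Suc k)) < \<delta>s/2" using reals_Archimedean by blast
      then show ?thesis by (intro that[of k]) (simp add: inverse_eq_divide add.commute)
    qed
    define m where "m = max N1 N2"
    define n where "n = r m"
    have T0: "0 \<le> T" using tau[of 0] by linarith
    have nN1: "norm (Ys n t - w t) < e" if "t \<in> {0..T}" for t
      using N1[rule_format, of m t] rge[of m] that unfolding n_def m_def by auto
    have "\<tau> n = T"
    proof (rule ccontr)
      assume "\<tau> n \<noteq> T"
      then have "\<tau> n < T" using tau[of n] by auto
      then have c1: "norm (Ys n 0 - ystar) < 1 / (real n + 1)" by (rule tauc)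
      have "n \<ge> N2" unfolding n_def m_def using rge[of "max N1 N2"] by auto
      then have "1 / (real n + 1) \<le> 1 / (real N2 + 1)" by (simp add: frac_le)
      with c1 N2 have c2: "norm (Ys n 0 - ystar) < \<delta>s/2" by linarith
      have c3: "norm (Ys n 0 - w 0) < \<delta>s/2" using nN1[of 0] T0 e_def by auto
      have "norm (w 0 - ystar) < \<delta>s/2 + \<delta>s/2"
        using tri3[of "w 0" ystar "Ys n 0"] c2 c3 by (simp add: norm_minus_commute)
      then show False using False by simp
    qed
    have a: "norm (Ys n (\<tau> n) - w (\<tau> n)) < \<eta>/4" using nN1[of "\<tau> n"] tau[of n] e_def by auto
    have b: "norm (w (\<tau> n) - ystar) < \<eta>/4" using wT \<open>\<tau> n = T\<close> by auto
    have "norm (Ys n (\<tau> n) - ystar) < \<eta>/4 + \<eta>/4"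
      using tri3[of "Ys n (\<tau> n)" ystar "w (\<tau> n)"] a b by linarith
    then show ?thesis by auto
  qed
qed



definition xsol :: "'a::real_normed_vector set \<Rightarrow> 'b set \<Rightarrow> ('a \<Rightarrow> 'b \<Rightarrow> 'a) \<Rightarrow> (real \<Rightarrow> 'a) \<Rightarrow> (real \<Rightarrow> 'b) \<Rightarrow> real \<Rightarrow> bool" where
  "xsol X Y f x y t0 \<longleftrightarrow>
    (\<forall>t\<ge>t0. x t \<in> X \<and> y t \<in> Y \<and> (x has_vector_derivative f (x t) (y t)) (at t within {t0..}))"

lemma Kinf_mono:
  assumes "class_K_inf \<alpha>" "0 \<le> a" "a \<le> b" shows "\<alpha> a \<le> \<alpha> b"
proof (cases "a = b")
  case False
  then have "a < b" using assms by simp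
  then show ?thesis using assms strict_mono_onD[of "{0..}" \<alpha> a b] unfolding class_K_inf_def by auto
qed simp

lemma Kinf_less:
  assumes "class_K_inf \<alpha>" "0 \<le> a" "0 \<le> b" "\<alpha> a < \<alpha> b" shows "a < b"
proof (rule ccontr)
  assume "\<not> a < b"
  then have "\<alpha> b \<le> \<alpha> a" using Kinf_mono[OF assms(1) assms(3)] by simp
  then show False using assms by simp
qed

lemma Kinf_pos:
  assumes "class_K_inf \<alpha>" "0 < a" shows "\<alpha> a > 0"
  using assms strict_mono_onD[of "{0..}" \<alpha> 0 a] unfolding class_K_inf_def by auto

lemma Kinf_cont0:
  assumes "class_K_inf \<alpha>" "e > 0" shows "\<exists>d>0. \<forall>r. 0 \<le> r \<longrightarrow> r < d \<longrightarrow> \<alpha> r < e"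
proof -
  have c: "continuous_on {0..} \<alpha>" and a0: "\<alpha> 0 = 0" using assms(1) unfolding class_K_inf_def by auto
  obtain d where "d > 0" "\<forall>x'\<in>{0..}. dist x' 0 < d \<longrightarrow> dist (\<alpha> x') (\<alpha> 0) < e"
    using c assms(2) unfolding continuous_on_iff by (meson atLeast_iff order_refl)
  then show ?thesis using a0 by (intro exI[of _ d]) (auto simp: dist_real_def)
qed

lemma Vdec:
  fixes f :: "'a::euclidean_space \<Rightarrow> 'b \<Rightarrow> 'a"
  assumes cl: "candidate_lyapunov X xstar U DU"
    and sig: "\<forall>x\<in>X. \<forall>y\<in>Y. \<sigma> (norm (x - xstar)) \<le> - (DU x \<bullet> f x y)"
    and xs: "xsol X Y f x y t0"
    and ab: "t0 \<le> a" "a \<le> b" and m: "\<And>s. a \<le> s \<Longrightarrow> s \<le> b \<Longrightarrow> m \<le> \<sigma> (norm (x s - xstar))"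
  shows "U (x b) \<le> U (x a) - m * (b - a)"
proof -
  have dU: "\<And>x. x \<in> X \<Longrightarrow> (U has_derivative (\<lambda>h. DU x \<bullet> h)) (at x within X)"
    using cl unfolding candidate_lyapunov_def by blast
  have dV: "((\<lambda>t. U (x t)) has_real_derivative (DU (x t) \<bullet> f (x t) (y t))) (at t within {t0..})"
    if "t \<ge> t0" for t
  proof -
    have xd: "(x has_derivative (\<lambda>h. h *\<^sub>R f (x t) (y t))) (at t within {t0..})"
      using xs that unfolding xsol_def has_vector_derivative_def by blast
    have sub: "x ` {t0..} \<subseteq> X" using xs unfolding xsol_def by auto
    have xX: "x t \<in> X" using xs that unfolding xsol_def by auto
    have "(U has_derivative (\<lambda>h. DU (x t) \<bullet> h)) (at (x t) within x ` {t0..})"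
      using has_derivative_subset[OF dU[OF xX] sub] .
    from diff_chain_within[OF xd this]
    have "((U \<circ> x) has_derivative ((\<lambda>h. DU (x t) \<bullet> h) \<circ> (\<lambda>h. h *\<^sub>R f (x t) (y t)))) (at t within {t0..})" .
    moreover have "((\<lambda>h. DU (x t) \<bullet> h) \<circ> (\<lambda>h. h *\<^sub>R f (x t) (y t))) = (*) (DU (x t) \<bullet> f (x t) (y t))"
      by (auto simp: fun_eq_iff mult.commute)
    ultimately show ?thesis unfolding has_field_derivative_def by (simp add: o_def)
  qed
  define \<phi> where "\<phi> s = U (x s) + m * s" for s
  have "\<phi> a \<ge> \<phi> b"
  proof (rule DERIV_nonpos_imp_decreasing_open[OF ab(2)])
    fix s assume s: "a < s" "s < b"
    then have st0: "s > t0" using ab by simp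
    have "at s within {t0..} = at s" using st0 by (intro at_within_interior) simp
    then have d1: "((\<lambda>t. U (x t)) has_real_derivative (DU (x s) \<bullet> f (x s) (y s))) (at s)"
      using dV[of s] st0 by simp
    have "((\<lambda>t. U (x t) + m * t) has_real_derivative (DU (x s) \<bullet> f (x s) (y s) + m * 1)) (at s)"
      using DERIV_add[OF d1 DERIV_cmult[OF DERIV_ident, of m s]] by simp
    moreover have "DU (x s) \<bullet> f (x s) (y s) + m * 1 \<le> 0"
    proof -
      have "x s \<in> X" "y s \<in> Y" using xs st0 unfolding xsol_def by auto
      then have "\<sigma> (norm (x s - xstar)) \<le> - (DU (x s) \<bullet> f (x s) (y s))" using sig by blast
      moreover have "m \<le> \<sigma> (norm (x s - xstar))" using m s by simp
      ultimately show ?thesis by simp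
    qed
    ultimately show "\<exists>y. (\<phi> has_real_derivative y) (at s) \<and> y \<le> 0"
      unfolding \<phi>_def by blast
  next
    have "continuous (at s within {a..b}) (\<lambda>t. U (x t))" if "s \<in> {a..b}" for s
    proof -
      have "continuous (at s within {t0..}) (\<lambda>t. U (x t))"
        using DERIV_continuous[OF dV[of s]] that ab by simp
      then show ?thesis by (rule continuous_within_subset) (use ab in auto)
    qed
    then have "continuous_on {a..b} (\<lambda>t. U (x t))"
      using continuous_on_eq_continuous_within by blast
    then show "continuous_on {a..b} \<phi>" unfolding \<phi>_def by (intro continuous_intros)
  qed
  then show ?thesis unfolding \<phi>_def by (simp add: algebra_simps)
qed


lemma cl_facts:
  assumes "candidate_lyapunov X xstar U DU"
  shows "\<exists>\<alpha>1 \<alpha>2. class_K_inf \<alpha>1 \<and> class_K_inf \<alpha>2 \<and>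
    (\<forall>x\<in>X. \<alpha>1 (norm (x - xstar)) \<le> U x) \<and> (\<forall>x\<in>X. U x \<le> \<alpha>2 (norm (x - xstar)))"
  using assms unfolding candidate_lyapunov_def by blast

lemma Xstab:
  fixes f :: "'a::euclidean_space \<Rightarrow> 'b \<Rightarrow> 'a"
  assumes cl: "candidate_lyapunov X xstar U DU"
    and sig: "\<forall>x\<in>X. \<forall>y\<in>Y. \<sigma> (norm (x - xstar)) \<le> - (DU x \<bullet> f x y)"
    and ps: "pos_def_fun \<sigma>" and eta: "\<eta> > 0"
  shows "\<exists>\<delta>>0. \<forall>x y t0. xsol X Y f x y t0 \<longrightarrow> norm (x t0 - xstar) < \<delta> \<longrightarrow> (\<forall>t\<ge>t0. norm (x t - xstar) < \<eta>)"
proof -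
  obtain \<alpha>1 \<alpha>2 where K1: "class_K_inf \<alpha>1" and K2: "class_K_inf \<alpha>2"
    and lo: "\<And>x. x \<in> X \<Longrightarrow> \<alpha>1 (norm (x - xstar)) \<le> U x"
    and up: "\<And>x. x \<in> X \<Longrightarrow> U x \<le> \<alpha>2 (norm (x - xstar))"
    using cl_facts[OF cl] by auto
  have "\<alpha>1 \<eta> > 0" by (rule Kinf_pos[OF K1 eta])
  then obtain d where d: "d > 0" "\<forall>r. 0 \<le> r \<longrightarrow> r < d \<longrightarrow> \<alpha>2 r < \<alpha>1 \<eta>"
    using Kinf_cont0[OF K2] by blast
  have sig0: "\<And>c. c \<ge> 0 \<Longrightarrow> \<sigma> c \<ge> 0" using ps unfolding pos_def_fun_def by blast
  show ?thesis
  proof (intro exI[of _ d] conjI allI impI)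
    show "d > 0" by (rule d(1))
    fix x y t0 t assume xs: "xsol X Y f x y t0" and x0: "norm (x t0 - xstar) < d" and t: "t \<ge> t0"
    have X0: "x t0 \<in> X" and Xt: "x t \<in> X" using xs t unfolding xsol_def by auto
    have "U (x t) \<le> U (x t0) - 0 * (t - t0)"
      by (rule Vdec[OF cl sig xs]) (use t sig0 in auto)
    also have "\<dots> \<le> \<alpha>2 (norm (x t0 - xstar))" using up[OF X0] by simp
    also have "\<dots> < \<alpha>1 \<eta>" using d x0 by simp
    finally have "\<alpha>1 (norm (x t - xstar)) < \<alpha>1 \<eta>" using lo[OF Xt] by linarith
    then show "norm (x t - xstar) < \<eta>" using Kinf_less[OF K1] eta by simp
  qed
qed

lemma Xattr:
  fixes f :: "'a::euclidean_space \<Rightarrow> 'b \<Rightarrow> 'a"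
  assumes cl: "candidate_lyapunov X xstar U DU"
    and sig: "\<forall>x\<in>X. \<forall>y\<in>Y. \<sigma> (norm (x - xstar)) \<le> - (DU x \<bullet> f x y)"
    and ps: "pos_def_fun \<sigma>" and eta: "\<eta> > 0" and rho: "\<rho> > 0"
  shows "\<exists>T\<ge>0. \<forall>x y t0. xsol X Y f x y t0 \<longrightarrow> norm (x t0 - xstar) < \<rho> \<longrightarrow> (\<forall>t\<ge>t0 + T. norm (x t - xstar) < \<eta>)"
proof -
  obtain \<alpha>1 \<alpha>2 where K1: "class_K_inf \<alpha>1" and K2: "class_K_inf \<alpha>2"
    and lo: "\<And>x. x \<in> X \<Longrightarrow> \<alpha>1 (norm (x - xstar)) \<le> U x"
    and up: "\<And>x. x \<in> X \<Longrightarrow> U x \<le> \<alpha>2 (norm (x - xstar))"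
    using cl_facts[OF cl] by auto
  have U0: "\<And>x. x \<in> X \<Longrightarrow> U x \<ge> 0" using cl unfolding candidate_lyapunov_def by blast
  have sig0: "\<And>c. c \<ge> 0 \<Longrightarrow> \<sigma> c \<ge> 0" and sigp: "\<And>c. c > 0 \<Longrightarrow> \<sigma> c > 0"
    and sigc: "continuous_on {0..} \<sigma>" using ps unfolding pos_def_fun_def by auto
  define M where "M = \<alpha>2 \<rho>"
  have M0: "M \<ge> 0" using K2 rho unfolding M_def class_K_inf_def by auto
  obtain R where R: "R \<ge> 0" "\<alpha>1 R > M" using K1 unfolding class_K_inf_def by blast
  have "\<alpha>1 \<eta> > 0" by (rule Kinf_pos[OF K1 eta])
  then obtain d where d: "d > 0" "\<forall>r. 0 \<le> r \<longrightarrow> r < d \<longrightarrow> \<alpha>2 r < \<alpha>1 \<eta>"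
    using Kinf_cont0[OF K2] by blast
  define \<epsilon> where "\<epsilon> = d / 2"
  define R' where "R' = max R \<epsilon>"
  have \<epsilon>0: "\<epsilon> > 0" unfolding \<epsilon>_def using d by simp
  obtain xm where xm: "xm \<in> {\<epsilon>..R'}" "\<forall>y\<in>{\<epsilon>..R'}. \<sigma> xm \<le> \<sigma> y"
  proof -
    have "continuous_on {\<epsilon>..R'} \<sigma>" by (rule continuous_on_subset[OF sigc]) (use \<epsilon>0 in auto)
    moreover have "{\<epsilon>..R'} \<noteq> {}" unfolding R'_def by simp
    ultimately show ?thesis using continuous_attains_inf[of "{\<epsilon>..R'}" \<sigma>] that by auto
  qed
  define m where "m = \<sigma> xm"
  have m0: "m > 0" unfolding m_def using xm(1) \<epsilon>0 sigp by simp
  define T where "T = M / m + 1"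
  have T0: "T \<ge> 0" unfolding T_def using M0 m0 by simp
  show ?thesis
  proof (intro exI[of _ T] conjI allI impI)
    show "T \<ge> 0" by (rule T0)
    fix x y t0 t assume xs: "xsol X Y f x y t0" and x0: "norm (x t0 - xstar) < \<rho>" and t: "t \<ge> t0 + T"
    have inX: "\<And>s. s \<ge> t0 \<Longrightarrow> x s \<in> X" using xs unfolding xsol_def by auto
    have dec: "U (x b) \<le> U (x a)" if "t0 \<le> a" "a \<le> b" for a b
      using Vdec[OF cl sig xs that, of 0] that sig0 by auto
    have V0: "U (x t0) \<le> M"
      using up[OF inX[of t0]] Kinf_mono[OF K2 _ less_imp_le[OF x0]] unfolding M_def by simp
    have nR: "norm (x s - xstar) < R" if "s \<ge> t0" for s
    proof -
      have "\<alpha>1 (norm (x s - xstar)) \<le> U (x s)" using lo[OF inX[OF that]] .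
      also have "\<dots> \<le> M" using dec[OF order_refl that] V0 by linarith
      finally have "\<alpha>1 (norm (x s - xstar)) < \<alpha>1 R" using R by linarith
      then show ?thesis using Kinf_less[OF K1] R by simp
    qed
    have "\<exists>s. t0 \<le> s \<and> s \<le> t0 + T \<and> U (x s) < \<alpha>1 \<eta>"
    proof (rule ccontr)
      assume "\<not> ?thesis"
      then have big: "\<And>s. t0 \<le> s \<Longrightarrow> s \<le> t0 + T \<Longrightarrow> U (x s) \<ge> \<alpha>1 \<eta>" by force
      have "U (x (t0 + T)) \<le> U (x t0) - m * (t0 + T - t0)"
      proof (rule Vdec[OF cl sig xs order_refl])
        show "t0 \<le> t0 + T" using T0 by simp
        fix s assume s: "t0 \<le> s" "s \<le> t0 + T"
        have nd: "norm (x s - xstar) \<ge> d"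
        proof (rule ccontr)
          assume "\<not> ?thesis"
          then have "\<alpha>2 (norm (x s - xstar)) < \<alpha>1 \<eta>" using d by simp
          then show False using up[OF inX[OF s(1)]] big[OF s] by linarith
        qed
        have "norm (x s - xstar) \<in> {\<epsilon>..R'}"
          using nd nR[OF s(1)] unfolding \<epsilon>_def R'_def using d by auto
        then show "m \<le> \<sigma> (norm (x s - xstar))" using xm(2) unfolding m_def by blast
      qed
      also have "\<dots> \<le> M - m * T" using V0 by simp
      also have "\<dots> = - m" unfolding T_def using m0 by (simp add: algebra_simps)
      finally have "U (x (t0 + T)) < 0" using m0 by linarith
      then show False using U0[OF inX[of "t0 + T"]] T0 by simp
    qed
    then obtain s where s: "t0 \<le> s" "s \<le> t0 + T" "U (x s) < \<alpha>1 \<eta>" by blast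
    have "\<alpha>1 (norm (x t - xstar)) \<le> U (x t)" using lo[OF inX] t T0 by simp
    also have "\<dots> \<le> U (x s)" using dec[OF s(1)] s t by simp
    finally have "\<alpha>1 (norm (x t - xstar)) < \<alpha>1 \<eta>" using s by linarith
    then show "norm (x t - xstar) < \<eta>" using Kinf_less[OF K1] eta by simp
  qed
qed



lemma tube:
  fixes G :: "'a::euclidean_space \<Rightarrow> 'b::euclidean_space \<Rightarrow> 'c::real_normed_vector"
  assumes cY: "compact Y" and cG: "continuous_on (X \<times> Y) (\<lambda>p. G (fst p) (snd p))"
    and x0: "xstar \<in> X" and e: "e > 0"
  shows "\<exists>r>0. \<forall>x\<in>X. \<forall>y\<in>Y. norm (x - xstar) < r \<longrightarrow> norm (G x y - G xstar y) < e"
proof (rule ccontr)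
  assume neg: "\<not> ?thesis"
  have "\<forall>n. \<exists>x. x \<in> X \<and> (\<exists>y. y \<in> Y \<and> norm (x - xstar) < inverse (real (Suc n)) \<and> \<not> norm (G x y - G xstar y) < e)"
  proof
    fix n :: nat
    have "inverse (real (Suc n)) > 0" by simp
    then show "\<exists>x. x \<in> X \<and> (\<exists>y. y \<in> Y \<and> norm (x - xstar) < inverse (real (Suc n)) \<and> \<not> norm (G x y - G xstar y) < e)"
      using neg by blast
  qed
  then have "\<exists>xs. \<forall>n. xs n \<in> X \<and> (\<exists>y. y \<in> Y \<and> norm (xs n - xstar) < inverse (real (Suc n)) \<and> \<not> norm (G (xs n) y - G xstar y) < e)"
    by (rule choice)
  then obtain xs where "\<forall>n. xs n \<in> X \<and> (\<exists>y. y \<in> Y \<and> norm (xs n - xstar) < inverse (real (Suc n)) \<and> \<not> norm (G (xs n) y - G xstar y) < e)"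
    by blast
  then have "\<forall>n. \<exists>y. xs n \<in> X \<and> y \<in> Y \<and> norm (xs n - xstar) < inverse (real (Suc n)) \<and> \<not> norm (G (xs n) y - G xstar y) < e"
    by blast
  then have "\<exists>ys. \<forall>n. xs n \<in> X \<and> ys n \<in> Y \<and> norm (xs n - xstar) < inverse (real (Suc n)) \<and> \<not> norm (G (xs n) (ys n) - G xstar (ys n)) < e"
    by (rule choice)
  then obtain ys where xy: "\<And>n. xs n \<in> X" "\<And>n. ys n \<in> Y" "\<And>n. norm (xs n - xstar) < inverse (real (Suc n))"
    "\<And>n. \<not> norm (G (xs n) (ys n) - G xstar (ys n)) < e"
    by blast
  have sc: "seq_compact Y" by (rule compact_imp_seq_compact[OF cY])
  from sc[unfolded seq_compact_def, rule_format, of ys] xy(2)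
  obtain l r where l: "l \<in> Y" "strict_mono (r::nat\<Rightarrow>nat)" "(ys \<circ> r) \<longlonglongrightarrow> l" by blast
  have "(\<lambda>n. xs (r n) - xstar) \<longlonglongrightarrow> 0"
  proof (rule Lim_null_comparison[OF _ LIMSEQ_inverse_real_of_nat])
    show "\<forall>\<^sub>F n in sequentially. norm (xs (r n) - xstar) \<le> inverse (real (Suc n))"
    proof (rule always_eventually, rule allI)
      fix n
      have "r n \<ge> n" using seq_suble[OF l(2)] by blast
      then have "inverse (real (Suc (r n))) \<le> inverse (real (Suc n))"
        by (simp add: le_imp_inverse_le)
      then show "norm (xs (r n) - xstar) \<le> inverse (real (Suc n))" using xy(3)[of "r n"] by linarith
    qed
  qed
  then have "(\<lambda>n. (xs (r n) - xstar) + xstar) \<longlonglongrightarrow> 0 + xstar" by (intro tendsto_add) auto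
  then have xl: "(\<lambda>n. xs (r n)) \<longlonglongrightarrow> xstar" by simp
  have yl: "(\<lambda>n. ys (r n)) \<longlonglongrightarrow> l" using l(3) by (simp add: o_def)
  have cs: "\<And>u a. a \<in> X \<times> Y \<Longrightarrow> (\<forall>n. u n \<in> X \<times> Y) \<Longrightarrow> u \<longlonglongrightarrow> a \<Longrightarrow>
      ((\<lambda>p. G (fst p) (snd p)) \<circ> u) \<longlonglongrightarrow> G (fst a) (snd a)"
    using cG unfolding continuous_on_sequentially by blast
  have l1: "(\<lambda>n. G (xs (r n)) (ys (r n))) \<longlonglongrightarrow> G xstar l"
    using cs[of "(xstar, l)" "\<lambda>n. (xs (r n), ys (r n))"] x0 l(1) xy(1,2) tendsto_Pair[OF xl yl]
    by (simp add: o_def)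
  have l2: "(\<lambda>n. G xstar (ys (r n))) \<longlonglongrightarrow> G xstar l"
  proof -
    have "(\<lambda>n. (xstar, ys (r n))) \<longlonglongrightarrow> (xstar, l)" by (intro tendsto_Pair tendsto_const yl)
    then show ?thesis using cs[of "(xstar, l)" "\<lambda>n. (xstar, ys (r n))"] x0 l(1) xy(2)
      by (simp add: o_def)
  qed
  have "(\<lambda>n. G (xs (r n)) (ys (r n)) - G xstar (ys (r n))) \<longlonglongrightarrow> G xstar l - G xstar l"
    by (intro tendsto_diff l1 l2)
  then obtain no where "\<forall>n\<ge>no. norm (G (xs (r n)) (ys (r n)) - G xstar (ys (r n)) - 0) < e"
    using e unfolding LIMSEQ_iff by auto
  then show False using xy(4)[of "r no"] by auto
qed

lemma shift_der:
  assumes "(z has_vector_derivative v) (at (s + \<tau>) within {t0..})" "t0 \<le> s" "\<tau> \<ge> 0"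
  shows "((\<lambda>\<tau>. z (s + \<tau>)) has_vector_derivative v) (at \<tau> within {0..})"
proof -
  have d1: "((\<lambda>\<tau>. s + \<tau>) has_vector_derivative 1) (at \<tau> within {0..})"
    by (auto intro!: derivative_eq_intros simp: has_vector_derivative_def)
  have "(\<lambda>\<tau>. s + \<tau>) ` {0..} \<subseteq> {t0..}" using assms(2) by auto
  then have d2: "(z has_vector_derivative v) (at (s + \<tau>) within (\<lambda>\<tau>. s + \<tau>) ` {0..})"
    by (rule has_vector_derivative_within_subset[OF assms(1)])
  from vector_diff_chain_within[OF d1 d2] show ?thesis by (simp add: o_def)
qed


lemma Yapply:
  fixes f :: "'a::euclidean_space \<Rightarrow> 'b::euclidean_space \<Rightarrow> 'a" and g :: "'a \<Rightarrow> 'b \<Rightarrow> 'b"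
    and Z :: "nat \<Rightarrow> real \<Rightarrow> 'a \<times> 'b"
  assumes cY: "compact Y" and cG: "continuous_on Y (g xstar)"
    and gas0: "gas (\<lambda>y t. g xstar y) Y (\<lambda>y. norm (y - ystar)) ystar"
    and rhoY: "\<forall>y\<in>Y. norm (y - ystar) < \<rho>Y" and eta: "\<eta> > 0"
    and T: "\<And>w. is_solution (\<lambda>y t. g xstar y) Y w (w 0) 0 \<Longrightarrow> norm (w 0 - ystar) < \<rho>Y \<Longrightarrow>
              \<forall>t\<ge>T. norm (w t - ystar) < \<eta>/4"
    and solZ: "\<And>n. is_solution (\<lambda>z t. (f (fst z) (snd z), g (fst z) (snd z))) (X \<times> Y) (Z n) (Z n (t0s n)) (t0s n)"
    and s: "\<And>n. t0s n \<le> s n"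
    and tau: "\<And>n. 0 \<le> \<tau> n \<and> \<tau> n \<le> T"
    and tb: "\<And>e. e > 0 \<Longrightarrow> \<exists>r>0. \<forall>x\<in>X. \<forall>y\<in>Y. norm (x - xstar) < r \<longrightarrow> norm (g x y - g xstar y) < e"
    and xconv: "\<And>r. r > 0 \<Longrightarrow> \<exists>N. \<forall>n\<ge>N. \<forall>t\<ge>s n. norm (fst (Z n t) - xstar) < r"
    and tauc: "\<And>n. \<tau> n < T \<Longrightarrow> norm (snd (Z n (s n)) - ystar) < 1 / (real n + 1)"
  shows "\<exists>n. norm (snd (Z n (s n + \<tau> n)) - ystar) < \<eta>/2"
proof -
  define Ys where "Ys n t = snd (Z n (s n + t))" for n t
  define D where "D n t = g (fst (Z n (s n + t))) (snd (Z n (s n + t)))" for n t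
  have inXY: "Z n t \<in> X \<times> Y" "(Z n has_vector_derivative (f (fst (Z n t)) (snd (Z n t)), g (fst (Z n t)) (snd (Z n t)))) (at t within {t0s n..})"
    if "t \<ge> t0s n" for n t
    using solZ[of n] that unfolding is_solution_def by auto
  have inY: "Ys n t \<in> Y" if "t \<ge> 0" for n t
  proof -
    have "s n + t \<ge> t0s n" using s[of n] that by simp
    from inXY(1)[OF this] show ?thesis unfolding Ys_def by (simp add: mem_Times_iff)
  qed
  have der: "(Ys n has_vector_derivative D n t) (at t within {0..})" if "t \<ge> 0" for n t
  proof -
    have "s n + t \<ge> t0s n" using s[of n] that by simp
    from shift_der[OF inXY(2)[OF this] s that]
    have "((\<lambda>\<tau>. Z n (s n + \<tau>)) has_vector_derivative
      (f (fst (Z n (s n + t))) (snd (Z n (s n + t))), g (fst (Z n (s n + t))) (snd (Z n (s n + t))))) (at t within {0..})" .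
    from hvd_snd[OF this] show ?thesis unfolding Ys_def D_def by simp
  qed
  have conv: "\<exists>N. \<forall>n\<ge>N. \<forall>t\<ge>0. norm (D n t - g xstar (Ys n t)) < e" if e: "e > 0" for e
  proof -
    obtain r where r: "r > 0" "\<forall>x\<in>X. \<forall>y\<in>Y. norm (x - xstar) < r \<longrightarrow> norm (g x y - g xstar y) < e"
      using tb[OF e] by blast
    obtain N where N: "\<forall>n\<ge>N. \<forall>t\<ge>s n. norm (fst (Z n t) - xstar) < r" using xconv[OF r(1)] by blast
    show ?thesis
    proof (intro exI[of _ N] allI impI)
      fix n t assume n: "n \<ge> N" and t: "(0::real) \<le> t"
      have st: "s n + t \<ge> t0s n" using s[of n] t by simp
      have "fst (Z n (s n + t)) \<in> X" "snd (Z n (s n + t)) \<in> Y" using inXY(1)[OF st] by (auto simp: mem_Times_iff)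
      moreover have "norm (fst (Z n (s n + t)) - xstar) < r" using N n t by simp
      ultimately show "norm (D n t - g xstar (Ys n t)) < e" unfolding D_def Ys_def using r(2) by blast
    qed
  qed
  have "\<exists>n. norm (Ys n (\<tau> n) - ystar) < \<eta>/2"
  proof (rule Ycore[OF cY cG inY der conv gas0 rhoY eta T tau])
    show "\<And>n. \<tau> n < T \<Longrightarrow> norm (Ys n 0 - ystar) < 1 / (real n + 1)" using tauc unfolding Ys_def by simp
  qed auto
  then show ?thesis unfolding Ys_def .
qed



theorem lemma5:
  fixes X :: "'a::euclidean_space set" and Y :: "'b::euclidean_space set"
    and f :: "'a \<Rightarrow> 'b \<Rightarrow> 'a" and g :: "'a \<Rightarrow> 'b \<Rightarrow> 'b"
    and xstar :: 'a and ystar :: 'b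
    and U :: "'a \<Rightarrow> real" and DU :: "'a \<Rightarrow> 'a" and \<sigma> :: "real \<Rightarrow> real"
  assumes "compact Y"
    and "xstar \<in> X"
    and "C1_on (X \<times> Y) (\<lambda>z. f (fst z) (snd z))"
    and "C1_on (X \<times> Y) (\<lambda>z. g (fst z) (snd z))"
    and "gas (\<lambda>y t. g xstar y) Y (\<lambda>y. norm (y - ystar)) ystar"
    and "candidate_lyapunov X xstar U DU"
    and "pos_def_fun \<sigma>"
    and "\<forall>x\<in>X. \<forall>y\<in>Y. \<sigma> (norm (x - xstar)) \<le> - (DU x \<bullet> f x y)"
  shows "gas (\<lambda>z t. (f (fst z) (snd z), g (fst z) (snd z))) (X \<times> Y)
             (\<lambda>z. norm (fst z - xstar) + norm (snd z - ystar)) (xstar, ystar)"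
proof -
  note cY = assms(1) and x0X = assms(2) and gas0 = assms(5) and cl = assms(6) and ps = assms(7)
    and sig = assms(8)
  let ?H = "\<lambda>z t. (f (fst z) (snd z), g (fst z) (snd z))"
  have ystarY: "ystar \<in> Y" using gas0 unfolding gas_def by blast
  have cg: "continuous_on (X \<times> Y) (\<lambda>z. g (fst z) (snd z))"
  proof -
    from assms(4) obtain F' where F': "\<forall>z\<in>X \<times> Y. ((\<lambda>z. g (fst z) (snd z)) has_derivative blinfun_apply (F' z)) (at z within X \<times> Y)"
      unfolding C1_on_def by blast
    then show ?thesis unfolding continuous_on_eq_continuous_within using has_derivative_continuous by blast
  qed
  have cG0: "continuous_on Y (g xstar)"
  proof -
    have c1: "continuous_on Y (\<lambda>y. (xstar, y))" by (intro continuous_intros)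
    have "(\<lambda>y. (xstar, y)) ` Y \<subseteq> X \<times> Y" using x0X by auto
    then have "continuous_on Y ((\<lambda>z. g (fst z) (snd z)) \<circ> (\<lambda>y. (xstar, y)))"
      using continuous_on_compose[OF c1 continuous_on_subset[OF cg]] by blast
    then show ?thesis by (simp add: o_def)
  qed
  obtain \<rho>Y where \<rho>Y: "\<forall>y\<in>Y. norm (y - ystar) < \<rho>Y"
  proof -
    obtain a where a: "\<forall>y\<in>Y. norm y \<le> a" using compact_imp_bounded[OF cY] unfolding bounded_iff by auto
    have "\<forall>y\<in>Y. norm (y - ystar) < a + norm ystar + 1"
    proof
      fix y assume "y \<in> Y"
      then have "norm y \<le> a" using a by blast
      moreover have "norm (y - ystar) \<le> norm y + norm ystar" by (rule norm_triangle_ineq4)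
      ultimately show "norm (y - ystar) < a + norm ystar + 1" by linarith
    qed
    then show ?thesis by (rule that)
  qed
  have \<rho>Y0: "\<rho>Y > 0" using \<rho>Y ystarY by fastforce
  have tb: "\<And>e. e > 0 \<Longrightarrow> \<exists>r>0. \<forall>x\<in>X. \<forall>y\<in>Y. norm (x - xstar) < r \<longrightarrow> norm (g x y - g xstar y) < e"
    using tube[OF cY cg x0X] by blast
  have solx: "xsol X Y f (\<lambda>t. fst (z t)) (\<lambda>t. snd (z t)) t0"
    if "is_solution ?H (X \<times> Y) z z0 t0" for z z0 t0
    unfolding xsol_def
  proof (intro allI impI conjI)
    fix t assume t: "t \<ge> t0"
    then have zt: "z t \<in> X \<times> Y" and
      dz: "(z has_vector_derivative ?H (z t) t) (at t within {t0..})"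
      using that unfolding is_solution_def by auto
    show "fst (z t) \<in> X" "snd (z t) \<in> Y" using zt by (auto simp: mem_Times_iff)
    show "((\<lambda>t. fst (z t)) has_vector_derivative f (fst (z t)) (snd (z t))) (at t within {t0..})"
      using hvd_fst[OF dz] by simp
  qed
  have z0eq: "z t0 = z0" if "is_solution ?H (X \<times> Y) z z0 t0" for z z0 t0
    using that unfolding is_solution_def by blast
  have Tnom: "\<exists>T\<ge>0. \<forall>w. is_solution (\<lambda>y t. g xstar y) Y w (w 0) 0 \<longrightarrow> norm (w 0 - ystar) < \<rho>Y \<longrightarrow>
      (\<forall>t\<ge>T. norm (w t - ystar) < \<eta>/4)" if eta: "\<eta> > 0" for \<eta>
  proof -
    have ga: "\<forall>\<eta>>0. \<forall>\<rho>>0. \<exists>T. \<forall>z z0 t0. t0 \<ge> 0 \<longrightarrow> is_solution (\<lambda>y t. g xstar y) Y z z0 t0 \<longrightarrow>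
        norm (z0 - ystar) < \<rho> \<longrightarrow> (\<forall>t\<ge>t0 + T. norm (z t - ystar) < \<eta>)"
      using gas0 unfolding gas_def by (rule conjunct2[OF conjunct2])
    have "\<eta>/4 > 0" using eta by simp
    from ga[rule_format, OF this \<rho>Y0] obtain T where
      T: "\<forall>z z0 t0. t0 \<ge> 0 \<longrightarrow> is_solution (\<lambda>y t. g xstar y) Y z z0 t0 \<longrightarrow>
        norm (z0 - ystar) < \<rho>Y \<longrightarrow> (\<forall>t\<ge>t0 + T. norm (z t - ystar) < \<eta>/4)" by blast
    show ?thesis
    proof (intro exI[of _ "max T 0"] conjI allI impI)
      fix w t assume "is_solution (\<lambda>y t. g xstar y) Y w (w 0) 0" "norm (w 0 - ystar) < \<rho>Y" "max T 0 \<le> t"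
      then show "norm (w t - ystar) < \<eta>/4" using T[rule_format, of 0 w "w 0" t] by simp
    qed simp
  qed
  have stab: "\<exists>\<delta>>0. \<forall>z z0 t0. t0 \<ge> 0 \<longrightarrow> is_solution ?H (X \<times> Y) z z0 t0 \<longrightarrow>
      norm (fst z0 - xstar) + norm (snd z0 - ystar) < \<delta> \<longrightarrow>
      (\<forall>t\<ge>t0. norm (fst (z t) - xstar) + norm (snd (z t) - ystar) < \<eta>)" if eta: "\<eta> > 0" for \<eta>
  proof -
    have "\<eta>/2 > 0" using eta by simp
    from Xstab[OF cl sig ps this] obtain \<delta>x where \<delta>x: "\<delta>x > 0"
      "\<forall>x y t0. xsol X Y f x y t0 \<longrightarrow> norm (x t0 - xstar) < \<delta>x \<longrightarrow> (\<forall>t\<ge>t0. norm (x t - xstar) < \<eta>/2)"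
      by blast
    from Tnom[OF eta] obtain T where T0: "T \<ge> 0" and Tp: "\<And>w. is_solution (\<lambda>y t. g xstar y) Y w (w 0) 0 \<Longrightarrow>
      norm (w 0 - ystar) < \<rho>Y \<Longrightarrow> \<forall>t\<ge>T. norm (w t - ystar) < \<eta>/4" by blast
    show ?thesis
    proof (rule ccontr)
      assume neg: "\<not> ?thesis"
      define Bad where "Bad n z t0 t \<longleftrightarrow> t0 \<ge> 0 \<and> is_solution ?H (X \<times> Y) z (z t0) t0 \<and>
        norm (fst (z t0) - xstar) + norm (snd (z t0) - ystar) < min \<delta>x (inverse (real (Suc n))) \<and>
        t \<ge> t0 \<and> \<not> norm (fst (z t) - xstar) + norm (snd (z t) - ystar) < \<eta>"
        for n :: nat and z :: "real \<Rightarrow> 'a \<times> 'b" and t0 t :: real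
      have "\<forall>n. \<exists>z t0 t. Bad n z t0 t"
      proof
        fix n :: nat
        have "min \<delta>x (inverse (real (Suc n))) > 0" using \<delta>x by simp
        then have "\<not> (\<forall>z z0 t0. t0 \<ge> 0 \<longrightarrow> is_solution ?H (X \<times> Y) z z0 t0 \<longrightarrow>
            norm (fst z0 - xstar) + norm (snd z0 - ystar) < min \<delta>x (inverse (real (Suc n))) \<longrightarrow>
            (\<forall>t\<ge>t0. norm (fst (z t) - xstar) + norm (snd (z t) - ystar) < \<eta>))"
          using neg by blast
        then obtain z z0 t0 where a: "0 \<le> t0" "is_solution ?H (X \<times> Y) z z0 t0"
          "norm (fst z0 - xstar) + norm (snd z0 - ystar) < min \<delta>x (inverse (real (Suc n)))"
          "\<not> (\<forall>t\<ge>t0. norm (fst (z t) - xstar) + norm (snd (z t) - ystar) < \<eta>)"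
          by blast
        from a(4) obtain t where tf: "t \<ge> t0" "\<not> norm (fst (z t) - xstar) + norm (snd (z t) - ystar) < \<eta>"
          by blast
        have zz: "z t0 = z0" using z0eq[OF a(2)] .
        have "Bad n z t0 t" unfolding Bad_def using a tf zz by simp
        then show "\<exists>z t0 t. Bad n z t0 t" by blast
      qed
      then have "\<exists>Z. \<forall>n. \<exists>t0 t. Bad n (Z n) t0 t" by (rule choice)
      then obtain Z where "\<forall>n. \<exists>t0 t. Bad n (Z n) t0 t" by blast
      then have "\<exists>t0s. \<forall>n. \<exists>t. Bad n (Z n) (t0s n) t" by (rule choice)
      then obtain t0s where "\<forall>n. \<exists>t. Bad n (Z n) (t0s n) t" by blast
      then have "\<exists>ts. \<forall>n. Bad n (Z n) (t0s n) (ts n)" by (rule choice)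
      then obtain ts where B: "\<And>n. Bad n (Z n) (t0s n) (ts n)" by blast
      have solZ: "\<And>n. is_solution ?H (X \<times> Y) (Z n) (Z n (t0s n)) (t0s n)"
        and tt: "\<And>n. ts n \<ge> t0s n"
        and small: "\<And>n. norm (fst (Z n (t0s n)) - xstar) + norm (snd (Z n (t0s n)) - ystar) < min \<delta>x (inverse (real (Suc n)))"
        and big: "\<And>n. \<not> norm (fst (Z n (ts n)) - xstar) + norm (snd (Z n (ts n)) - ystar) < \<eta>"
        using B unfolding Bad_def by blast+
      define s where "s n = max (t0s n) (ts n - T)" for n
      define \<tau> where "\<tau> n = ts n - s n" for n
      have "\<exists>n. norm (snd (Z n (s n + \<tau> n)) - ystar) < \<eta>/2"
      proof (rule Yapply[where Z=Z and t0s=t0s and s=s and \<tau>=\<tau> and f=f and X=X and g=g and xstar=xstar and Y=Y and ystar=ystar, OF cY cG0 gas0 \<rho>Y eta Tp])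
        show "\<And>n. is_solution ?H (X \<times> Y) (Z n) (Z n (t0s n)) (t0s n)" by (rule solZ)
        show "\<And>n. t0s n \<le> s n" by (simp add: s_def)
        show "\<And>n. 0 \<le> \<tau> n \<and> \<tau> n \<le> T" using tt T0 by (auto simp: \<tau>_def s_def)
        show "\<And>e. e > 0 \<Longrightarrow> \<exists>r>0. \<forall>x\<in>X. \<forall>y\<in>Y. norm (x - xstar) < r \<longrightarrow> norm (g x y - g xstar y) < e"
          by (rule tb)
        show "\<exists>N. \<forall>n\<ge>N. \<forall>t\<ge>s n. norm (fst (Z n t) - xstar) < r" if r: "r > 0" for r
        proof -
          from Xstab[OF cl sig ps r] obtain \<delta>r where \<delta>r: "\<delta>r > 0"
            "\<forall>x y t0. xsol X Y f x y t0 \<longrightarrow> norm (x t0 - xstar) < \<delta>r \<longrightarrow> (\<forall>t\<ge>t0. norm (x t - xstar) < r)"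
            by blast
          obtain N where N: "inverse (real (Suc N)) < \<delta>r" using reals_Archimedean[OF \<delta>r(1)] by blast
          show ?thesis
          proof (intro exI[of _ N] allI impI)
            fix n t assume n: "n \<ge> N" and t: "t \<ge> s n"
            have i1: "inverse (real (Suc n)) \<le> inverse (real (Suc N))" using n by (simp add: le_imp_inverse_le)
            have i2: "norm (fst (Z n (t0s n)) - xstar) + norm (snd (Z n (t0s n)) - ystar) < inverse (real (Suc n))"
              using small[of n] by simp
            have i3: "norm (fst (Z n (t0s n)) - xstar) \<le> norm (fst (Z n (t0s n)) - xstar) + norm (snd (Z n (t0s n)) - ystar)"
              by simp
            have "norm (fst (Z n (t0s n)) - xstar) < \<delta>r" using i1 i2 i3 N by linarith
            moreover have "t \<ge> t0s n" using t by (simp add: s_def)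
            ultimately show "norm (fst (Z n t) - xstar) < r" using \<delta>r(2) solx[OF solZ[of n]] by blast
          qed
        qed
        show "norm (snd (Z n (s n)) - ystar) < 1 / (real n + 1)" if "\<tau> n < T" for n
        proof -
          have "s n = t0s n" using that by (auto simp: \<tau>_def s_def)
          moreover have "norm (snd (Z n (t0s n)) - ystar) < inverse (real (Suc n))"
          proof -
            have "norm (fst (Z n (t0s n)) - xstar) + norm (snd (Z n (t0s n)) - ystar) < inverse (real (Suc n))"
              using small[of n] by simp
            moreover have "norm (fst (Z n (t0s n)) - xstar) \<ge> 0" by simp
            ultimately show ?thesis by linarith
          qed
          ultimately show ?thesis by (simp add: inverse_eq_divide add.commute)
        qed
      qed
      then obtain n where n: "norm (snd (Z n (ts n)) - ystar) < \<eta>/2" by (auto simp: \<tau>_def)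
      have "norm (fst (Z n (t0s n)) - xstar) < \<delta>x"
      proof -
        have "norm (fst (Z n (t0s n)) - xstar) + norm (snd (Z n (t0s n)) - ystar) < \<delta>x"
          using small[of n] by simp
        moreover have "norm (snd (Z n (t0s n)) - ystar) \<ge> 0" by simp
        ultimately show ?thesis by linarith
      qed
      then have "norm (fst (Z n (ts n)) - xstar) < \<eta>/2" using \<delta>x(2) solx[OF solZ[of n]] tt[of n] by blast
      then show False using n big[of n] by linarith
    qed
  qed
  have attr: "\<exists>TT. \<forall>z z0 t0. t0 \<ge> 0 \<longrightarrow> is_solution ?H (X \<times> Y) z z0 t0 \<longrightarrow>
      norm (fst z0 - xstar) + norm (snd z0 - ystar) < \<rho> \<longrightarrow>
      (\<forall>t\<ge>t0 + TT. norm (fst (z t) - xstar) + norm (snd (z t) - ystar) < \<eta>)" if eta: "\<eta> > 0" and rho: "\<rho> > 0" for \<eta> \<rho>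
  proof -
    have "\<eta>/2 > 0" using eta by simp
    from Xattr[OF cl sig ps this rho] obtain Tx where Tx: "Tx \<ge> 0"
      "\<forall>x y t0. xsol X Y f x y t0 \<longrightarrow> norm (x t0 - xstar) < \<rho> \<longrightarrow> (\<forall>t\<ge>t0 + Tx. norm (x t - xstar) < \<eta>/2)"
      by blast
    from Tnom[OF eta] obtain T where T0: "T \<ge> 0" and Tp: "\<And>w. is_solution (\<lambda>y t. g xstar y) Y w (w 0) 0 \<Longrightarrow>
      norm (w 0 - ystar) < \<rho>Y \<Longrightarrow> \<forall>t\<ge>T. norm (w t - ystar) < \<eta>/4" by blast
    show ?thesis
    proof (rule ccontr)
      assume neg: "\<not> ?thesis"
      define Bad where "Bad n z t0 t \<longleftrightarrow> t0 \<ge> 0 \<and> is_solution ?H (X \<times> Y) z (z t0) t0 \<and>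
        norm (fst (z t0) - xstar) + norm (snd (z t0) - ystar) < \<rho> \<and>
        t \<ge> t0 + (real n + T + Tx) \<and> \<not> norm (fst (z t) - xstar) + norm (snd (z t) - ystar) < \<eta>"
        for n :: nat and z :: "real \<Rightarrow> 'a \<times> 'b" and t0 t :: real
      have "\<forall>n. \<exists>z t0 t. Bad n z t0 t"
      proof
        fix n :: nat
        have "\<not> (\<forall>z z0 t0. t0 \<ge> 0 \<longrightarrow> is_solution ?H (X \<times> Y) z z0 t0 \<longrightarrow>
            norm (fst z0 - xstar) + norm (snd z0 - ystar) < \<rho> \<longrightarrow>
            (\<forall>t\<ge>t0 + (real n + T + Tx). norm (fst (z t) - xstar) + norm (snd (z t) - ystar) < \<eta>))"
          using neg by blast
        then obtain z z0 t0 where a: "0 \<le> t0" "is_solution ?H (X \<times> Y) z z0 t0"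
          "norm (fst z0 - xstar) + norm (snd z0 - ystar) < \<rho>"
          "\<not> (\<forall>t\<ge>t0 + (real n + T + Tx). norm (fst (z t) - xstar) + norm (snd (z t) - ystar) < \<eta>)"
          by blast
        from a(4) obtain t where tf: "t \<ge> t0 + (real n + T + Tx)" "\<not> norm (fst (z t) - xstar) + norm (snd (z t) - ystar) < \<eta>"
          by blast
        have zz: "z t0 = z0" using z0eq[OF a(2)] .
        have "Bad n z t0 t" unfolding Bad_def using a tf zz by simp
        then show "\<exists>z t0 t. Bad n z t0 t" by blast
      qed
      then have "\<exists>Z. \<forall>n. \<exists>t0 t. Bad n (Z n) t0 t" by (rule choice)
      then obtain Z where "\<forall>n. \<exists>t0 t. Bad n (Z n) t0 t" by blast
      then have "\<exists>t0s. \<forall>n. \<exists>t. Bad n (Z n) (t0s n) t" by (rule choice)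
      then obtain t0s where "\<forall>n. \<exists>t. Bad n (Z n) (t0s n) t" by blast
      then have "\<exists>ts. \<forall>n. Bad n (Z n) (t0s n) (ts n)" by (rule choice)
      then obtain ts where B: "\<And>n. Bad n (Z n) (t0s n) (ts n)" by blast
      have solZ: "\<And>n. is_solution ?H (X \<times> Y) (Z n) (Z n (t0s n)) (t0s n)"
        and tt: "\<And>n. ts n \<ge> t0s n + (real n + T + Tx)"
        and small: "\<And>n. norm (fst (Z n (t0s n)) - xstar) + norm (snd (Z n (t0s n)) - ystar) < \<rho>"
        and big: "\<And>n. \<not> norm (fst (Z n (ts n)) - xstar) + norm (snd (Z n (ts n)) - ystar) < \<eta>"
        using B unfolding Bad_def by blast+
      have smallx: "norm (fst (Z n (t0s n)) - xstar) < \<rho>" for n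
        using small[of n] norm_ge_zero[of "snd (Z n (t0s n)) - ystar"] by linarith
      define s where "s n = ts n - T" for n
      define \<tau> where "\<tau> n = T" for n :: nat
      have "\<exists>n. norm (snd (Z n (s n + \<tau> n)) - ystar) < \<eta>/2"
      proof (rule Yapply[where Z=Z and t0s=t0s and s=s and \<tau>=\<tau> and f=f and X=X and g=g and xstar=xstar and Y=Y and ystar=ystar, OF cY cG0 gas0 \<rho>Y eta Tp])
        show "\<And>n. is_solution ?H (X \<times> Y) (Z n) (Z n (t0s n)) (t0s n)" by (rule solZ)
        show "t0s n \<le> s n" for n
          using tt[of n] Tx(1) of_nat_0_le_iff[of n] unfolding s_def by linarith
        show "\<And>n. 0 \<le> \<tau> n \<and> \<tau> n \<le> T" using T0 by (auto simp: \<tau>_def)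
        show "\<And>e. e > 0 \<Longrightarrow> \<exists>r>0. \<forall>x\<in>X. \<forall>y\<in>Y. norm (x - xstar) < r \<longrightarrow> norm (g x y - g xstar y) < e"
          by (rule tb)
        show "\<exists>N. \<forall>n\<ge>N. \<forall>t\<ge>s n. norm (fst (Z n t) - xstar) < r" if r: "r > 0" for r
        proof -
          from Xattr[OF cl sig ps r rho] obtain Tr where Tr: "Tr \<ge> 0"
            "\<forall>x y t0. xsol X Y f x y t0 \<longrightarrow> norm (x t0 - xstar) < \<rho> \<longrightarrow> (\<forall>t\<ge>t0 + Tr. norm (x t - xstar) < r)"
            by blast
          show ?thesis
          proof (intro exI[of _ "nat \<lceil>Tr\<rceil>"] allI impI)
            fix n t assume n: "n \<ge> nat \<lceil>Tr\<rceil>" and t: "t \<ge> s n"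
            have "real n \<ge> Tr" using n by linarith
            then have "t \<ge> t0s n + Tr" using t tt[of n] Tx(1) by (simp add: s_def)
            then show "norm (fst (Z n t) - xstar) < r" using Tr(2) solx[OF solZ[of n]] smallx[of n] by blast
          qed
        qed
        show "norm (snd (Z n (s n)) - ystar) < 1 / (real n + 1)" if "\<tau> n < T" for n
          using that by (simp add: \<tau>_def)
      qed
      then obtain n where n: "norm (snd (Z n (ts n)) - ystar) < \<eta>/2" by (auto simp: \<tau>_def s_def)
      have "ts n \<ge> t0s n + Tx" using tt[of n] T0 by simp
      then have "norm (fst (Z n (ts n)) - xstar) < \<eta>/2" using Tx(2) solx[OF solZ[of n]] smallx[of n] by blast
      then show False using n big[of n] by linarith
    qed
  qed
  show ?thesis
    unfolding gas_def
  proof (intro conjI)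
    show "(xstar, ystar) \<in> X \<times> Y" using x0X ystarY by simp
    show "\<forall>\<eta>>0. \<exists>\<delta>>0. \<forall>z z0 t0. 0 \<le> t0 \<longrightarrow> is_solution ?H (X \<times> Y) z z0 t0 \<longrightarrow>
      norm (fst z0 - xstar) + norm (snd z0 - ystar) < \<delta> \<longrightarrow>
      (\<forall>t\<ge>t0. norm (fst (z t) - xstar) + norm (snd (z t) - ystar) < \<eta>)"
      using stab by blast
    show "\<forall>\<eta>>0. \<forall>\<rho>>0. \<exists>T. \<forall>z z0 t0. 0 \<le> t0 \<longrightarrow> is_solution ?H (X \<times> Y) z z0 t0 \<longrightarrow>
      norm (fst z0 - xstar) + norm (snd z0 - ystar) < \<rho> \<longrightarrow>
      (\<forall>t\<ge>t0 + T. norm (fst (z t) - xstar) + norm (snd (z t) - ystar) < \<eta>)"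
      using attr by blast
  qed
qed


end
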